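(* Let $X$ be a metric space and $n\ge0$. Suppose that for every $r>0$ there is a subspace $X_r\subset X$ such that $\operatorname{asdim}(X_r)\le n$ and $r\text{-}\dim(X\setminus X_r)\le n$. Then $\operatorname{asdim}(X)\le n$.
   Context: For $r>0$, the $r$-components of a set $C$ in a metric space are the equivalence classes of points of $C$ joined by finite sequences in $C$ with consecutive distances $\le r$. The $r$-scale dimension $r\text{-}\dim(Z)$ of a metric space $Z$ is the smallest $n\ge0$ such that $Z=Z_1\cup\dots\cup Z_{n+1}$ where, for each $i$, the $r$-components of $Z_i$ have uniformly bounded diameters. $\operatorname{asdim}(Z)\le n$ iff for every $r>0$ there are $D<\infty$ and a decomposition $Z=Z_1\cup\dots\cup Z_{n+1}$ such that all $r$-components of each $Z_i$ have diameter $\le D$ (i.e. $r\text{-}\dim(Z)\le n$ for all $r>0$). *)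

theory Defs
  imports "HOL-Analysis.Analysis"
begin

definition r_chained :: "real \<Rightarrow> 'a::metric_space set \<Rightarrow> 'a \<Rightarrow> 'a \<Rightarrow> bool" where
  "r_chained r C x y \<longleftrightarrow>
     (\<exists>(k::nat) p. p 0 = x \<and> p k = y \<and> (\<forall>i\<le>k. p i \<in> C) \<and>
                  (\<forall>i<k. dist (p i) (p (Suc i)) \<le> r))"

definition r_components :: "real \<Rightarrow> 'a::metric_space set \<Rightarrow> 'a set set" where
  "r_components r C = {{y \<in> C. r_chained r C x y} | x. x \<in> C}"

definition r_bounded_components :: "real \<Rightarrow> 'a::metric_space set \<Rightarrow> bool" where
  "r_bounded_components r C \<longleftrightarrow>
     (\<exists>D::real. \<forall>K\<in>r_components r C. \<forall>x\<in>K. \<forall>y\<in>K. dist x y \<le> D)"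

definition r_dim_le :: "real \<Rightarrow> 'a::metric_space set \<Rightarrow> nat \<Rightarrow> bool" where
  "r_dim_le r Z n \<longleftrightarrow>
     (\<exists>Zs :: nat \<Rightarrow> 'a set. Z = (\<Union>i\<le>n. Zs i) \<and> (\<forall>i\<le>n. r_bounded_components r (Zs i)))"

definition asdim_le :: "'a::metric_space set \<Rightarrow> nat \<Rightarrow> bool" where
  "asdim_le Z n \<longleftrightarrow> (\<forall>r>0. r_dim_le r Z n)"

end

theory Submission
  imports Defs
begin

lemma rc_refl: "x \<in> C \<Longrightarrow> r_chained r C x x"
  unfolding r_chained_def by (rule exI[of _ 0], rule exI[of _ "\<lambda>_. x"]) auto

lemma rc_mem: "r_chained r C x y \<Longrightarrow> x \<in> C \<and> y \<in> C"
  unfolding r_chained_def by auto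

lemma rc_snoc:
  assumes "r_chained r C x y" "z \<in> C" "dist y z \<le> r"
  shows "r_chained r C x z"
proof -
  obtain k p where p: "p 0 = x" "p k = y" "\<forall>i\<le>k. p i \<in> C" "\<forall>i<k. dist (p i) (p (Suc i)) \<le> r"
    using assms(1) unfolding r_chained_def by blast
  define q where "q = p(Suc k := z)"
  have "q 0 = x" "q (Suc k) = z" using p by (auto simp: q_def)
  moreover have "\<forall>i\<le>Suc k. q i \<in> C" using p assms by (auto simp: q_def le_Suc_eq)
  moreover have "\<forall>i<Suc k. dist (q i) (q (Suc i)) \<le> r"
    using p assms by (auto simp: q_def less_Suc_eq)
  ultimately show ?thesis unfolding r_chained_def by blast
qed

lemma rc_induct:
  assumes "r_chained r C x y" "P x"
    "\<And>y z. P y \<Longrightarrow> y \<in> C \<Longrightarrow> z \<in> C \<Longrightarrow> dist y z \<le> r \<Longrightarrow> P z"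
  shows "P y"
proof -
  obtain k p where p: "p 0 = x" "p k = y" "\<forall>i\<le>k. p i \<in> C" "\<forall>i<k. dist (p i) (p (Suc i)) \<le> r"
    using assms(1) unfolding r_chained_def by blast
  have "\<forall>i\<le>k. P (p i)"
  proof (intro allI impI)
    fix i assume "i \<le> k" then show "P (p i)"
    proof (induction i)
      case 0 then show ?case using p assms(2) by simp
    next
      case (Suc i)
      then show ?case using p assms(3)[of "p i" "p (Suc i)"] by auto
    qed
  qed
  then show ?thesis using p by auto
qed

lemma union_bound:
  assumes B: "\<forall>x\<in>B. \<forall>y\<in>B. r_chained r B x y \<longrightarrow> dist x y \<le> D"
    and D: "0 \<le> D" and r: "0 < r"
    and A: "\<forall>x\<in>A. \<forall>y\<in>A. r_chained (D+2*r) A x y \<longrightarrow> dist x y \<le> E"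
    and E: "0 \<le> E" and xy: "r_chained r (A\<union>B) x y"
  shows "dist x y \<le> E + 2*(D+r)"
proof -
  define s where "s = D + 2*r"
  define near where "near a y \<longleftrightarrow> y = a \<or> (\<exists>b\<in>B. dist a b \<le> r \<and> r_chained r B b y)" for a y
  define nearL where "nearL x a \<longleftrightarrow> x = a \<or> (\<exists>b\<in>B. r_chained r B x b \<and> dist b a \<le> r)" for x a
  define P where "P y \<longleftrightarrow> r_chained r B x y \<or>
      (\<exists>a\<in>A. \<exists>a'\<in>A. nearL x a \<and> r_chained s A a a' \<and> near a' y)" for y
  have x: "x \<in> A \<union> B" using rc_mem[OF xy] by auto
  have "P y"
  proof (rule rc_induct[OF xy])
    show "P x"
    proof (cases "x \<in> B")
      case True then show ?thesis unfolding P_def using rc_refl by blast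
    next
      case False then have "x \<in> A" using x by auto
      then show ?thesis unfolding P_def nearL_def near_def using rc_refl by blast
    qed
  next
    fix y z assume Py: "P y" and y: "y \<in> A \<union> B" and z: "z \<in> A \<union> B" and yz: "dist y z \<le> r"
    show "P z"
    proof (cases "r_chained r B x y")
      case True
      show ?thesis
      proof (cases "z \<in> B")
        case zB: True then show ?thesis unfolding P_def using rc_snoc[OF True zB yz] by blast
      next
        case False then have zA: "z \<in> A" using z by auto
        have "y \<in> B" using rc_mem[OF True] by auto
        then have "nearL x z" unfolding nearL_def using True yz by blast
        then show ?thesis unfolding P_def near_def using zA rc_refl by blast
      qed
    next
      case False
      then obtain a a' where aa: "a \<in> A" "a' \<in> A" "nearL x a" "r_chained s A a a'" "near a' y"
        using Py unfolding P_def by blast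
      show ?thesis
      proof (cases "z \<in> B")
        case zB: True
        have "near a' z"
        proof (cases "y = a'")
          case True then show ?thesis unfolding near_def using zB yz rc_refl by blast
        next
          case False
          then obtain b where "b \<in> B" "dist a' b \<le> r" "r_chained r B b y"
            using aa(5) unfolding near_def by blast
          then show ?thesis unfolding near_def using rc_snoc[OF _ zB yz] by blast
        qed
        then show ?thesis unfolding P_def using aa by blast
      next
        case False then have zA: "z \<in> A" using z by auto
        have "dist a' z \<le> s"
        proof (cases "y = a'")
          case True then show ?thesis using yz D r unfolding s_def by simp
        next
          case False
          then obtain b where b: "b \<in> B" "dist a' b \<le> r" "r_chained r B b y"
            using aa(5) unfolding near_def by blast
          have "dist b y \<le> D" using B b rc_mem[OF b(3)] by blast
          moreover have "dist a' z \<le> dist a' b + dist b y + dist y z"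
            by (metis add_mono dist_triangle order_trans order_refl)
          ultimately show ?thesis using b yz unfolding s_def by linarith
        qed
        then have "r_chained s A a z" using rc_snoc[OF aa(4) zA] by blast
        then show ?thesis unfolding P_def near_def using aa zA by blast
      qed
    qed
  qed
  then show ?thesis
  proof (cases "r_chained r B x y")
    case True
    then have "dist x y \<le> D" using B rc_mem[OF True] by blast
    then show ?thesis using D r E by (simp add: algebra_simps)
  next
    case False
    then obtain a a' where aa: "a \<in> A" "a' \<in> A" "nearL x a" "r_chained s A a a'" "near a' y"
      using \<open>P y\<close> unfolding P_def by blast
    have e: "dist a a' \<le> E" using A aa unfolding s_def by blast
    have 1: "dist x a \<le> D + r"
    proof (cases "x = a")
      case True then show ?thesis using D r by simp
    next
      case False
      then obtain b where b: "b \<in> B" "r_chained r B x b" "dist b a \<le> r"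
        using aa(3) unfolding nearL_def by blast
      have "dist x b \<le> D" using B b rc_mem[OF b(2)] by blast
      then show ?thesis using b dist_triangle[of x a b] by linarith
    qed
    have 2: "dist a' y \<le> D + r"
    proof (cases "y = a'")
      case True then show ?thesis using D r by simp
    next
      case False
      then obtain b where b: "b \<in> B" "dist a' b \<le> r" "r_chained r B b y"
        using aa(5) unfolding near_def by blast
      have "dist b y \<le> D" using B b rc_mem[OF b(3)] by blast
      then show ?thesis using b dist_triangle[of a' y b] by linarith
    qed
    have "dist x y \<le> dist x a + dist a a' + dist a' y"
      by (metis add_mono dist_triangle order_trans order_refl)
    then show ?thesis using 1 2 e by (simp add: algebra_simps)
  qed
qed


lemma rbc_D:
  assumes "r_bounded_components r C"
  obtains D where "\<forall>x\<in>C. \<forall>y\<in>C. r_chained r C x y \<longrightarrow> dist x y \<le> D"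
proof -
  obtain D where D: "\<forall>K\<in>r_components r C. \<forall>x\<in>K. \<forall>y\<in>K. dist x y \<le> D"
    using assms unfolding r_bounded_components_def by blast
  have "\<forall>x\<in>C. \<forall>y\<in>C. r_chained r C x y \<longrightarrow> dist x y \<le> D"
  proof (intro ballI impI)
    fix x y assume xy: "x \<in> C" "y \<in> C" "r_chained r C x y"
    let ?K = "{y \<in> C. r_chained r C x y}"
    have "?K \<in> r_components r C" unfolding r_components_def using xy by blast
    moreover have "x \<in> ?K" using xy(1) rc_refl[OF xy(1)] by simp
    moreover have "y \<in> ?K" using xy by simp
    ultimately show "dist x y \<le> D" using D by (meson)
  qed
  then show ?thesis using that by blast
qed

lemma rbc_I:
  assumes "\<forall>x\<in>C. \<forall>y\<in>C. r_chained r C x y \<longrightarrow> dist x y \<le> D"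
  shows "r_bounded_components r C"
proof -
  have "\<forall>K\<in>r_components r C. \<forall>u\<in>K. \<forall>v\<in>K. dist u v \<le> 2*D"
  proof (intro ballI)
    fix K u v assume K: "K \<in> r_components r C" and u: "u \<in> K" and v: "v \<in> K"
    obtain x where x: "x \<in> C" "K = {y \<in> C. r_chained r C x y}"
      using K unfolding r_components_def by blast
    have "u \<in> C" "r_chained r C x u" "v \<in> C" "r_chained r C x v" using x u v by auto
    then have "dist x u \<le> D" "dist x v \<le> D" using assms x(1) by blast+
    moreover have "dist u v \<le> dist x u + dist x v" by (metis dist_commute dist_triangle)
    ultimately show "dist u v \<le> 2*D" by (simp add: algebra_simps)
  qed
  then show ?thesis unfolding r_bounded_components_def by blast
qed

lemma dim_uniform:
  assumes "r_dim_le r Z n"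
  obtains Zs D where "Z = (\<Union>i\<le>n. Zs i)" "0 \<le> D"
    "\<forall>i\<le>n. \<forall>x\<in>Zs i. \<forall>y\<in>Zs i. r_chained r (Zs i) x y \<longrightarrow> dist x y \<le> D"
proof -
  obtain Zs where Zs: "Z = (\<Union>i\<le>n. Zs i)" "\<forall>i\<le>n. r_bounded_components r (Zs i)"
    using assms unfolding r_dim_le_def by blast
  have "\<forall>i. \<exists>D. i \<le> n \<longrightarrow> (\<forall>x\<in>Zs i. \<forall>y\<in>Zs i. r_chained r (Zs i) x y \<longrightarrow> dist x y \<le> D)"
  proof
    fix i show "\<exists>D. i \<le> n \<longrightarrow> (\<forall>x\<in>Zs i. \<forall>y\<in>Zs i. r_chained r (Zs i) x y \<longrightarrow> dist x y \<le> D)"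
    proof (cases "i \<le> n")
      case True
      then obtain D where "\<forall>x\<in>Zs i. \<forall>y\<in>Zs i. r_chained r (Zs i) x y \<longrightarrow> dist x y \<le> D"
        using Zs(2) rbc_D by blast
      then show ?thesis by blast
    qed simp
  qed
  then obtain Df where Df0: "\<forall>i. i \<le> n \<longrightarrow> (\<forall>x\<in>Zs i. \<forall>y\<in>Zs i. r_chained r (Zs i) x y \<longrightarrow> dist x y \<le> Df i)"
    by (rule choice[THEN exE])
  have Df: "\<And>i. i \<le> n \<Longrightarrow> \<forall>x\<in>Zs i. \<forall>y\<in>Zs i. r_chained r (Zs i) x y \<longrightarrow> dist x y \<le> Df i"
    using Df0 by blast
  define D where "D = (\<Sum>i\<le>n. \<bar>Df i\<bar>)"
  have le: "Df i \<le> D" if "i \<le> n" for i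
  proof -
    have "\<bar>Df i\<bar> \<le> D" unfolding D_def
      by (rule member_le_sum) (use that in auto)
    then show ?thesis by linarith
  qed
  have "0 \<le> D" unfolding D_def by (simp add: sum_nonneg)
  moreover have "\<forall>i\<le>n. \<forall>x\<in>Zs i. \<forall>y\<in>Zs i. r_chained r (Zs i) x y \<longrightarrow> dist x y \<le> D"
  proof (intro allI impI ballI)
    fix i x y assume "i \<le> n" "x \<in> Zs i" "y \<in> Zs i" "r_chained r (Zs i) x y"
    then have "dist x y \<le> Df i" using Df by blast
    then show "dist x y \<le> D" using le \<open>i \<le> n\<close> by (meson order_trans)
  qed
  ultimately show ?thesis using that Zs(1) by blast
qed

theorem mainTheorem10:
  fixes X :: "'a::metric_space set" and n :: nat
  assumes "\<forall>r>0. \<exists>Xr. Xr \<subseteq> X \<and> asdim_le Xr n \<and> r_dim_le r (X - Xr) n"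
  shows "asdim_le X n"
  unfolding asdim_le_def
proof (intro allI impI)
  fix r :: real assume r: "0 < r"
  obtain Xr where Xr: "Xr \<subseteq> X" "asdim_le Xr n" "r_dim_le r (X - Xr) n"
    using assms r by blast
  obtain Bs D where B: "X - Xr = (\<Union>i\<le>n. Bs i)" "0 \<le> D"
    "\<forall>i\<le>n. \<forall>x\<in>Bs i. \<forall>y\<in>Bs i. r_chained r (Bs i) x y \<longrightarrow> dist x y \<le> D"
    using dim_uniform[OF Xr(3)] by blast
  have "r_dim_le (D + 2*r) Xr n" using Xr(2) B(2) r unfolding asdim_le_def by simp
  then obtain As E where A: "Xr = (\<Union>i\<le>n. As i)" "0 \<le> E"
    "\<forall>i\<le>n. \<forall>x\<in>As i. \<forall>y\<in>As i. r_chained (D + 2*r) (As i) x y \<longrightarrow> dist x y \<le> E"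
    using dim_uniform by blast
  define Zs where "Zs i = As i \<union> Bs i" for i
  have "X = (\<Union>i\<le>n. Zs i)" using A(1) B(1) Xr(1) unfolding Zs_def by blast
  moreover have "\<forall>i\<le>n. r_bounded_components r (Zs i)"
  proof (intro allI impI)
    fix i assume i: "i \<le> n"
    have b: "\<forall>x\<in>Bs i. \<forall>y\<in>Bs i. r_chained r (Bs i) x y \<longrightarrow> dist x y \<le> D"
      using B(3) i by blast
    have a: "\<forall>x\<in>As i. \<forall>y\<in>As i. r_chained (D + 2*r) (As i) x y \<longrightarrow> dist x y \<le> E"
      using A(3) i by blast
    have "\<forall>x\<in>As i \<union> Bs i. \<forall>y\<in>As i \<union> Bs i. r_chained r (As i \<union> Bs i) x y \<longrightarrow> dist x y \<le> E + 2*(D+r)"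
      using union_bound[OF b B(2) r a A(2)] by blast
    then show "r_bounded_components r (Zs i)" unfolding Zs_def by (rule rbc_I)
  qed
  ultimately show "r_dim_le r X n" unfolding r_dim_le_def by blast
qed

end
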